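(* Let $v\in\mathbb{C}$ and let $S\geq1$ be a fixed integer. Put $\tilde p(z)=1-e^z+z$. As $n\to\infty$, \begin{align*} \int_{-2}^{0}e^{n\tilde p(z)}e^{vz}\,dz&=\sum_{s=0}^{S-1}\Gamma\!\left(\frac{s+1}{2}\right)\frac{(-1)^s\tilde\beta_s(v)}{n^{(s+1)/2}}+O\!\left(\frac{1}{n^{(S+1)/2}}\right),\\ \int_{0}^{2}e^{n\tilde p(z)}e^{vz}\,dz&=\sum_{s=0}^{S-1}\Gamma\!\left(\frac{s+1}{2}\right)\frac{\tilde\beta_s(v)}{n^{(s+1)/2}}+O\!\left(\frac{1}{n^{(S+1)/2}}\right), \end{align*} where \[ \tilde\beta_s(v)=\sum_{m=0}^{s}\frac{v^{s-m}}{(s-m)!}\sum_{k=0}^{m}2^{(s-1)/2+k}\binom{-(s+1)/2}{k}\mathcal{A}_{m,k}\!\left(\tfrac1{3!},\tfrac1{4!},\tfrac1{5!},\dots\right). \]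
   Context: De Moivre polynomial $\mathcal{A}_{n,k}(a_1,a_2,\dots)$: coefficient of $x^n$ in $(a_1x+a_2x^2+\cdots)^k$. $\binom{x}{k}=x(x-1)\cdots(x-k+1)/k!$ for complex $x$. *)

theory Defs
  imports "HOL-Analysis.Analysis" "HOL-Library.Landau_Symbols"
    "HOL-Computational_Algebra.Formal_Power_Series"
begin

text \<open>De Moivre polynomial: coefficient of x^n in (a 1 * x + a 2 * x^2 + ...)^k.
  The sequence a is indexed from 1; the value a 0 is ignored.\<close>
definition demoivre :: "(nat \<Rightarrow> 'a::comm_ring_1) \<Rightarrow> nat \<Rightarrow> nat \<Rightarrow> 'a" where
  "demoivre a n k = fps_nth ((Abs_fps (\<lambda>j. if j = 0 then 0 else a j)) ^ k) n"

definition ptilde :: "real \<Rightarrow> real" where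
  "ptilde z = 1 - exp z + z"

text \<open>beta~_s(v), with coefficients a_j = 1/(j+2)!, i.e. 1/3!, 1/4!, ...\<close>
definition beta_tilde :: "nat \<Rightarrow> complex \<Rightarrow> complex" where
  "beta_tilde s v = (\<Sum>m=0..s. v ^ (s - m) / of_nat (fact (s - m)) *
      complex_of_real (\<Sum>k=0..m. 2 powr ((real s - 1) / 2 + real k)
         * ((- (real s + 1) / 2) gchoose k)
         * demoivre (\<lambda>j. 1 / fact (j + 2)) m k))"

end

theory Submission
  imports Defs "HOL-Complex_Analysis.Complex_Analysis"
begin


lemma lag_deriv_id:
  fixes W :: "'a::field_char_0 fps"
  assumes W0: "fps_nth W 0 = 1" and k: "k \<ge> 1"
  shows "of_nat k * (fps_deriv (fps_X * W) * (inverse W)^(k+1))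
       = of_nat (k+1) * (inverse W)^k - fps_deriv (fps_X * (inverse W)^k)"
proof -
  define V where "V = inverse W"
  have VW: "V * W = 1" unfolding V_def using W0 by (simp add: inverse_mult_eq_1)
  have dV: "fps_deriv V = - fps_deriv W * V^2" unfolding V_def using W0 by (simp add: fps_inverse_deriv)
  have dVk: "fps_deriv (V^k) = of_nat k * fps_deriv V * V^(k-1)" by (rule fps_deriv_power')
  have pk: "V^2 * V^(k-1) = V^(k+1)" using k by (simp add: power_add[symmetric])
  have pk2: "V^(k+1) * W = V^k" using VW by (simp add: mult.assoc mult.commute mult.left_commute)
  have "of_nat k * (fps_deriv (fps_X * W) * V^(k+1))
      = of_nat k * ((W + fps_X * fps_deriv W) * V^(k+1))" by simp
  also have "\<dots> = of_nat k * V^k + of_nat k * fps_X * fps_deriv W * V^(k+1)"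
    using pk2 by (simp add: algebra_simps)
  also have "\<dots> = of_nat (k+1) * V^k - fps_deriv (fps_X * V^k)"
    using pk by (simp add: dVk dV algebra_simps)
  finally show ?thesis unfolding V_def .
qed

lemma lag_orth_lt:
  fixes W :: "'a::field_char_0 fps"
  assumes W0: "fps_nth W 0 = 1" and k: "k \<ge> 1"
  shows "fps_nth (fps_deriv (fps_X * W) * (inverse W)^(k+1)) k = 0"
proof -
  have "fps_nth (of_nat k * (fps_deriv (fps_X * W) * (inverse W)^(k+1))) k = 0"
    unfolding lag_deriv_id[OF assms] by (simp add: fps_of_nat[symmetric] algebra_simps)
  hence "of_nat k * fps_nth (fps_deriv (fps_X * W) * (inverse W)^(k+1)) k = 0"
    by (simp add: fps_of_nat[symmetric])
  thus ?thesis using k by simp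
qed

lemma lag_orth:
  fixes W :: "'a::field_char_0 fps"
  assumes W0: "fps_nth W 0 = 1"
  shows "fps_nth ((fps_X * W)^s * fps_deriv (fps_X * W) * (inverse W)^(j+1)) j = (if s = j then 1 else 0)"
proof -
  define V where "V = inverse W"
  have VW: "V * W = 1" unfolding V_def using W0 by (simp add: inverse_mult_eq_1)
  have V0: "fps_nth V 0 = 1" unfolding V_def using W0 by simp
  have eq: "(fps_X * W)^s * fps_deriv (fps_X * W) * V^(j+1)
      = fps_X^s * (W^s * fps_deriv (fps_X * W) * V^(j+1))"
    by (simp add: power_mult_distrib algebra_simps)
  show ?thesis
  proof (cases "j < s")
    case True
    then show ?thesis unfolding V_def[symmetric] eq fps_X_power_mult_nth by simp
  next
    case False
    define k where "k = j - s"
    have jk: "j + 1 = s + (k + 1)" using False k_def by simp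
    have "W^s * fps_deriv (fps_X * W) * V^(j+1) = (V * W)^s * (fps_deriv (fps_X * W) * V^(k+1))"
      unfolding jk power_add power_mult_distrib by (simp add: algebra_simps)
    also have "\<dots> = fps_deriv (fps_X * W) * V^(k+1)" using VW by simp
    finally have e2: "W^s * fps_deriv (fps_X * W) * V^(j+1) = fps_deriv (fps_X * W) * V^(k+1)" .
    show ?thesis
    proof (cases "k = 0")
      case True
      hence "s = j" using False k_def by simp
      thus ?thesis unfolding V_def[symmetric] eq fps_X_power_mult_nth e2 using True V0 W0
        by (simp add: fps_mult_nth)
    next
      case kpos: False
      have "fps_nth (fps_deriv (fps_X * W) * V^(k+1)) k = 0"
        unfolding V_def by (rule lag_orth_lt[OF W0]) (use kpos in simp)
      thus ?thesis unfolding V_def[symmetric] eq fps_X_power_mult_nth e2 using False kpos k_def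
        by simp
    qed
  qed
qed

lemma lag_main:
  fixes W G :: "'a::field_char_0 fps"
  assumes W0: "fps_nth W 0 = 1" and jS: "j < S"
  defines "c \<equiv> \<lambda>s. fps_nth (G * (inverse W)^(s+1)) s"
  shows "fps_nth (G - (\<Sum>s<S. fps_const (c s) * ((fps_X * W)^s * fps_deriv (fps_X * W)))) j = 0"
  using jS
proof (induction j rule: less_induct)
  case (less j)
  define D where "D = G - (\<Sum>s<S. fps_const (c s) * ((fps_X * W)^s * fps_deriv (fps_X * W)))"
  define V where "V = inverse W"
  have V0: "fps_nth V 0 = 1" unfolding V_def using W0 by simp
  have DV: "D * V^(j+1) = G * V^(j+1) - (\<Sum>s<S. fps_const (c s) * ((fps_X * W)^s * fps_deriv (fps_X * W) * V^(j+1)))"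
    unfolding D_def by (simp add: sum_distrib_right left_diff_distrib mult.assoc)
  have "fps_nth (D * V^(j+1)) j = c j - (\<Sum>s<S. c s * (if s = j then 1 else 0))"
    unfolding DV fps_sub_nth fps_sum_nth fps_mult_left_const_nth unfolding V_def lag_orth[OF W0]
    by (simp add: c_def)
  also have "\<dots> = c j - (\<Sum>s<S. if s = j then c s else 0)"
    by (intro arg_cong2[where f="(-)"] refl sum.cong) auto
  also have "\<dots> = 0" using less.prems by simp
  finally have A: "fps_nth (D * V^(j+1)) j = 0" .
  have "fps_nth (D * V^(j+1)) j = (\<Sum>i=0..j. fps_nth D i * fps_nth (V^(j+1)) (j - i))"
    by (rule fps_mult_nth)
  also have "\<dots> = (\<Sum>i\<in>{j}. fps_nth D i * fps_nth (V^(j+1)) (j - i))"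
    using less.IH less.prems unfolding D_def by (intro sum.mono_neutral_right) auto
  also have "\<dots> = fps_nth D j" using V0 by (simp add: fps_nth_power_0)
  finally show ?case using A unfolding D_def by simp
qed


lemma of_real_gbinomial: "of_real (a gchoose k) = (of_real a gchoose k :: 'a :: {real_field, field_char_0})"
  by (simp add: gbinomial_prod_rev of_real_prod)

definition Ar :: "real fps" where "Ar = Abs_fps (\<lambda>j. if j = 0 then 0 else 1 / fact (j+2))"
definition Ac :: "complex fps" where "Ac = Abs_fps (\<lambda>j. if j = 0 then 0 else 1 / fact (j+2))"
definition Hc :: "complex fps" where "Hc = fps_const 2 * Ac"
definition Ef :: "complex \<Rightarrow> complex fps" where "Ef a = fps_compose (fps_binomial a) Hc"

lemma Hc0 [simp]: "fps_nth Hc 0 = 0" by (simp add: Hc_def Ac_def)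

lemma Ac_pow_nth: "fps_nth (Ac ^ k) m = of_real (fps_nth (Ar ^ k) m)"
proof (induction k arbitrary: m)
  case 0 then show ?case by simp
next
  case (Suc k)
  have "fps_nth (Ac ^ Suc k) m = (\<Sum>i=0..m. fps_nth Ac i * fps_nth (Ac^k) (m - i))"
    by (simp add: fps_mult_nth)
  also have "\<dots> = (\<Sum>i=0..m. of_real (fps_nth Ar i * fps_nth (Ar^k) (m - i)))"
    unfolding Suc.IH by (intro sum.cong refl) (simp add: Ac_def Ar_def)
  also have "\<dots> = of_real (fps_nth (Ar ^ Suc k) m)"
    by (simp add: fps_mult_nth)
  finally show ?case .
qed

lemma demoivre_Ar: "demoivre (\<lambda>j. 1 / fact (j + 2)) m k = fps_nth (Ar ^ k) m"
  unfolding demoivre_def Ar_def by (rule refl)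

lemma Ef_add: "Ef (a + b) = Ef a * Ef b"
  by (simp add: Ef_def fps_binomial_add_mult fps_compose_mult_distrib)

lemma Ef_0 [simp]: "Ef 0 = 1"
  by (simp add: Ef_def)

lemma Ef_pow: "Ef a ^ n = Ef (of_nat n * a)"
  by (simp add: Ef_def fps_compose_power fps_binomial_power)

lemma Ef_inv_pow: "inverse (Ef (1/2)) ^ (j+1) = Ef (- (of_nat (j+1)) / 2)"
proof -
  have "Ef (1/2) ^ (j+1) * Ef (- (of_nat (j+1)) / 2) = 1"
    unfolding Ef_pow Ef_add[symmetric] by (simp add: add_divide_distrib[symmetric])
  hence "inverse (Ef (1/2) ^ (j+1)) = Ef (- (of_nat (j+1)) / 2)"
    by (rule fps_inverse_unique)
  thus ?thesis by (simp only: fps_inverse_power)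
qed

lemma Ef_nth: "fps_nth (Ef a) m = (\<Sum>k=0..m. (a gchoose k) * 2^k * of_real (fps_nth (Ar^k) m))"
  by (simp add: Ef_def fps_compose_nth Hc_def power_mult_distrib fps_const_power Ac_pow_nth
      mult.assoc)

lemma Ef_half0: "fps_nth (Ef (1/2)) 0 = 1"
  by (simp add: Ef_def)

definition cc :: "complex \<Rightarrow> nat \<Rightarrow> complex" where
  "cc v s = fps_nth (fps_exp v * inverse (Ef (1/2)) ^ (s+1)) s"

lemma cc_beta: "complex_of_real (2 powr ((real s - 1) / 2)) * cc v s = beta_tilde s v"
proof -
  have "cc v s = fps_nth (Ef (- (of_nat (s+1)) / 2) * fps_exp v) s"
    unfolding cc_def Ef_inv_pow by (simp add: mult.commute)
  also have "\<dots> = (\<Sum>m=0..s. fps_nth (Ef (- (of_nat (s+1)) / 2)) m * (v ^ (s - m) / fact (s - m)))"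
    by (simp add: fps_mult_nth)
  finally have 1: "cc v s = \<dots>" .
  have 2: "complex_of_real (2 powr ((real s - 1) / 2)) * fps_nth (Ef (- (of_nat (s+1)) / 2)) m
        = complex_of_real (\<Sum>k=0..m. 2 powr ((real s - 1) / 2 + real k)
         * ((- (real s + 1) / 2) gchoose k)
         * demoivre (\<lambda>j. 1 / fact (j + 2)) m k)" for m
  proof -
    have "complex_of_real (2 powr ((real s - 1) / 2)) * fps_nth (Ef (- (of_nat (s+1)) / 2)) m
       = (\<Sum>k=0..m. complex_of_real (2 powr ((real s - 1) / 2) * 2^k * ((- (real s + 1) / 2) gchoose k)
           * fps_nth (Ar^k) m))"
      unfolding Ef_nth sum_distrib_left
      by (intro sum.cong refl) (simp add: of_real_gbinomial add.commute)
    also have "\<dots> = complex_of_real (\<Sum>k=0..m. 2 powr ((real s - 1) / 2 + real k)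
         * ((- (real s + 1) / 2) gchoose k)
         * demoivre (\<lambda>j. 1 / fact (j + 2)) m k)"
      unfolding of_real_sum
      by (intro sum.cong refl arg_cong[where f=complex_of_real])
         (simp add: demoivre_Ar[symmetric] powr_add powr_realpow del: fact_Suc)
    finally show ?thesis .
  qed
  show ?thesis
    unfolding 1 beta_tilde_def sum_distrib_left
    by (intro sum.cong refl) (subst 2[symmetric], simp add: algebra_simps)
qed


lemma pw_aux:
  fixes t lam :: real
  assumes tpos: "t > 0" and lam: "lam > 0"
  shows "(lam * t) powr (- 1 / 2) / 2 * (exp (- t) * (t / lam) powr (real s / 2))
       = (1 / (2 * lam powr ((real s + 1)/2))) * (t powr ((real s + 1)/2 - 1) / exp t)"
proof -
  have e1: "(lam * t) powr (- 1 / 2) = 1 / (lam powr (1/2) * t powr (1/2))"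
  proof -
    have "(lam * t) powr (- 1 / 2) = (lam * t) powr (- (1 / 2))" by simp
    also have "\<dots> = inverse ((lam * t) powr (1/2))" by (rule powr_minus)
    also have "\<dots> = 1 / (lam powr (1/2) * t powr (1/2))" using tpos lam by (simp add: powr_mult inverse_eq_divide)
    finally show ?thesis .
  qed
  have e2: "(t / lam) powr (real s / 2) = t powr (real s / 2) / lam powr (real s / 2)"
    using tpos lam by (simp add: powr_divide)
  have e3: "t powr ((real s + 1)/2 - 1) = t powr (real s / 2) / t powr (1/2)"
  proof -
    have "(real s + 1)/2 - 1 = real s / 2 - 1/2" by (simp add: field_simps)
    thus ?thesis by (simp only: powr_diff)
  qed
  have e4: "lam powr ((real s + 1)/2) = lam powr (real s / 2) * lam powr (1/2)"
  proof -
    have "(real s + 1)/2 = real s / 2 + 1/2" by (simp add: field_simps)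
    thus ?thesis by (simp only: powr_add)
  qed
  have p: "lam powr (1/2) > 0" "t powr (1/2) > 0" "lam powr (real s / 2) > 0" using tpos lam by auto
  show ?thesis unfolding e1 e2 e3 e4 using p by (simp add: exp_minus field_simps)
qed

lemma gauss_trunc:
  fixes lam L :: real and s k :: nat
  assumes lam: "lam > 0" and L: "L > 0"
  shows "0 \<le> Gamma ((real s + 1)/2) - 2 * lam powr ((real s + 1)/2) * integral {0..L} (\<lambda>y. exp (-lam*y^2) * y^s)"
    and "Gamma ((real s + 1)/2) - 2 * lam powr ((real s + 1)/2) * integral {0..L} (\<lambda>y. exp (-lam*y^2) * y^s)
          \<le> Gamma ((real s + 1)/2 + real k) / (lam * L^2)^k"
proof -
  define a where "a = (real s + 1)/2"
  have a: "a > 0" unfolding a_def by simp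
  define T where "T = lam * L^2"
  have T: "T > 0" unfolding T_def using lam L by simp
  define f where "f = (\<lambda>y::real. exp (-lam*y^2) * y^s)"
  define g where "g = (\<lambda>t::real. sqrt (t / lam))"
  define g' where "g' = (\<lambda>t::real. if t = 0 then 0 else 1 / (2 * sqrt (lam * t)))"
  define h where "h = (\<lambda>t::real. t powr (a - 1) / exp t)"
  define K where "K = integral {0..L} f"
  have gT: "g T = L" unfolding g_def T_def using lam L by simp
  have g0: "g 0 = 0" unfolding g_def by simp
  have sub: "((\<lambda>t. g' t *\<^sub>R f (g t)) has_integral integral {g 0..g T} f) {0..T}"
  proof (rule has_integral_substitution_strong[of "{0}" 0 T g 0 L f g'])
    show "0 \<le> T" using T by simp
    show "g 0 \<le> g T" unfolding g0 gT using L by simp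
    show "g ` {0..T} \<subseteq> {0..L}"
    proof
      fix y assume "y \<in> g ` {0..T}"
      then obtain t where t: "t \<in> {0..T}" "y = g t" by auto
      have "sqrt (t / lam) \<le> sqrt (T / lam)" using t lam by (intro real_sqrt_le_mono divide_right_mono) auto
      thus "y \<in> {0..L}" using t gT lam unfolding g_def by auto
    qed
    show "continuous_on {0..L} f" unfolding f_def by (intro continuous_intros)
    show "continuous_on {0..T} g" unfolding g_def using lam by (intro continuous_intros) auto
    fix x assume x: "x \<in> {0..T} - {0}"
    hence xpos: "x > 0" by auto
    have "((\<lambda>t. sqrt (t / lam)) has_real_derivative (inverse (sqrt (x / lam)) / 2 * (1 / lam))) (at x)"
      using xpos lam by (auto intro!: derivative_eq_intros simp: divide_less_0_iff)
    moreover have "inverse (sqrt (x / lam)) / 2 * (1 / lam) = g' x"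
      using xpos lam unfolding g'_def
      by (simp add: real_sqrt_divide real_sqrt_mult field_simps)
    ultimately show "(g has_real_derivative g' x) (at x within {0..T})"
      unfolding g_def by (simp add: has_field_derivative_at_within)
  qed simp
  have pt: "g' t *\<^sub>R f (g t) = (1 / (2 * lam powr a)) * h t" if t: "t \<in> {0..T}" for t
  proof (cases "t = 0")
    case True thus ?thesis unfolding g'_def h_def by simp
  next
    case False
    hence tpos: "t > 0" using t by auto
    have 1: "sqrt (t / lam) ^ s = (t / lam) powr (real s / 2)"
      using tpos lam by (simp add: powr_half_sqrt[symmetric] powr_realpow[symmetric] powr_powr)
    have 2: "1 / (2 * sqrt (lam * t)) = (lam * t) powr (- 1 / 2) / 2"
      using tpos lam by (simp add: powr_half_sqrt[symmetric] powr_minus_divide divide_simps)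
    have "g' t *\<^sub>R f (g t) = (1 / (2 * sqrt (lam * t))) * (exp (- t) * sqrt (t / lam) ^ s)"
      unfolding g'_def f_def g_def using False tpos lam by (simp add: power2_eq_square)
    also have "\<dots> = (lam * t) powr (- 1 / 2) / 2 * (exp (- t) * (t / lam) powr (real s / 2))"
      unfolding 1 2 by simp
    also have "\<dots> = (1 / (2 * lam powr a)) * h t"
      unfolding h_def a_def using tpos lam by (rule pw_aux)
    finally show ?thesis .
  qed
  have "((\<lambda>t. (1 / (2 * lam powr a)) * h t) has_integral K) {0..T}"
    using has_integral_eq[OF _ sub, of "\<lambda>t. (1 / (2 * lam powr a)) * h t"] pt
    unfolding K_def g0 gT by auto
  from has_integral_cmul[OF this, of "2 * lam powr a"]
  have hT: "(h has_integral (2 * lam powr a * K)) {0..T}"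
    using lam by simp
  have hT': "((\<lambda>t. if t \<in> {0..T} then h t else 0) has_integral (2 * lam powr a * K)) {0..}"
    using hT by (subst has_integral_restrict) auto
  have hG: "(h has_integral Gamma a) {0..}" unfolding h_def by (rule Gamma_integral_real[OF a])
  have diff: "((\<lambda>t. h t - (if t \<in> {0..T} then h t else 0)) has_integral (Gamma a - 2 * lam powr a * K)) {0..}"
    by (rule has_integral_diff[OF hG hT'])
  show "0 \<le> Gamma ((real s + 1)/2) - 2 * lam powr ((real s + 1)/2) * integral {0..L} (\<lambda>y. exp (-lam*y^2) * y^s)"
  proof -
    have "0 \<le> Gamma a - 2 * lam powr a * K"
      by (rule has_integral_le[OF has_integral_0 diff]) (auto simp: h_def)
    thus ?thesis unfolding a_def K_def f_def .
  qed
  have hG2: "((\<lambda>t. (t powr (a + real k - 1) / exp t) / T^k) has_integral (Gamma (a + real k) / T^k)) {0..}"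
    using has_integral_cmul[OF Gamma_integral_real[of "a + real k"], of "1 / T^k"] a by (simp add: mult.commute)
  have "Gamma a - 2 * lam powr a * K \<le> Gamma (a + real k) / T^k"
  proof (rule has_integral_le[OF diff hG2])
    fix t :: real assume t: "t \<in> {0..}"
    show "h t - (if t \<in> {0..T} then h t else 0) \<le> t powr (a + real k - 1) / exp t / T ^ k"
    proof (cases "t \<le> T")
      case True thus ?thesis using t T by auto
    next
      case False
      hence tT: "t > T" by simp
      hence tpos: "t > 0" using T by simp
      have "T^k \<le> t^k" using tT T by (intro power_mono) auto
      hence "h t * T^k \<le> h t * t^k" by (intro mult_left_mono) (auto simp: h_def)
      also have "h t * t^k = t powr (a + real k - 1) / exp t"
        unfolding h_def using tpos by (simp add: powr_add powr_realpow[symmetric] powr_diff)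
      finally show ?thesis using False T by (simp add: field_simps)
    qed
  qed
  thus "Gamma ((real s + 1)/2) - 2 * lam powr ((real s + 1)/2) * integral {0..L} (\<lambda>y. exp (-lam*y^2) * y^s)
          \<le> Gamma ((real s + 1)/2 + real k) / (lam * L^2)^k"
    unfolding a_def K_def f_def T_def .
qed


lemma exp_gt_1_plus: "x \<noteq> 0 \<Longrightarrow> 1 + x < exp (x::real)"
proof (cases "1 + x / 2 \<ge> 0")
  case True
  assume x: "x \<noteq> 0"
  have "(1 + x/2)^2 \<le> exp (x/2) ^ 2"
    using True by (intro power_mono) auto
  also have "exp (x/2) ^ 2 = exp x" by (simp add: exp_double[symmetric])
  finally have "1 + x + x^2/4 \<le> exp x" by (simp add: power2_eq_square field_simps)
  moreover have "x^2/4 > 0" using x by simp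
  ultimately show ?thesis by linarith
next
  case False
  hence "1 + x < 0" by simp
  thus ?thesis using exp_gt_zero[of x] by linarith
qed

definition hfun :: "complex \<Rightarrow> complex" where "hfun = eval_fps Hc"

definition Fe :: "complex fps" where "Fe = fps_exp 1 - 1 - fps_X"

lemma Hc_alt: "Hc = fps_const 2 * fps_shift 2 Fe - 1"
  by (auto simp: fps_eq_iff Hc_def Ac_def Fe_def field_simps)

lemma Hc_radius: "fps_conv_radius Hc = \<infinity>"
proof -
  have "fps_conv_radius (fps_shift 2 Fe) = \<infinity>"
  proof -
    have "fps_conv_radius (fps_exp (1::complex) - 1) \<ge> \<infinity>"
      using fps_conv_radius_diff[of "fps_exp (1::complex)" 1] by simp
    hence "fps_conv_radius (fps_exp (1::complex) - 1 - fps_X) \<ge> \<infinity>"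
      using fps_conv_radius_diff[of "fps_exp (1::complex) - 1" fps_X] by simp
    thus ?thesis unfolding Fe_def by (simp add: top_unique)
  qed
  hence "fps_conv_radius (fps_const 2 * fps_shift 2 Fe) = \<infinity>"
    by (simp add: fps_conv_radius_cmult_left)
  hence "fps_conv_radius (fps_const 2 * fps_shift 2 Fe - 1) \<ge> \<infinity>"
    using fps_conv_radius_diff[of "fps_const 2 * fps_shift 2 Fe" 1] by simp
  thus ?thesis unfolding Hc_alt by (simp add: top_unique)
qed

lemma Fe_radius: "fps_conv_radius Fe = \<infinity>"
proof -
  have "fps_conv_radius (fps_exp (1::complex) - 1) \<ge> \<infinity>"
    using fps_conv_radius_diff[of "fps_exp (1::complex)" 1] by simp
  hence "fps_conv_radius (fps_exp (1::complex) - 1 - fps_X) \<ge> \<infinity>"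
    using fps_conv_radius_diff[of "fps_exp (1::complex) - 1" fps_X] by simp
  thus ?thesis unfolding Fe_def by (simp add: top_unique)
qed

lemma Fe_subdegree: "subdegree Fe \<ge> 2"
proof (rule subdegree_geI)
  show "Fe \<noteq> 0"
  proof
    assume "Fe = 0"
    hence "fps_nth Fe 2 = 0" by simp
    thus False by (simp add: Fe_def)
  qed
  fix i :: nat assume "i < 2"
  hence "i = 0 \<or> i = 1" by auto
  thus "fps_nth Fe i = 0" by (auto simp: Fe_def)
qed

lemma eval_Fe: "eval_fps Fe z = exp z - 1 - z"
  unfolding Fe_def
  by (subst eval_fps_diff, use fps_conv_radius_diff[of "fps_exp (1::complex)" 1] in \<open>simp_all\<close>)+

lemma hfun_eq: "z \<noteq> 0 \<Longrightarrow> 1 + hfun z = 2 * (exp z - 1 - z) / z^2"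
proof -
  assume z: "z \<noteq> 0"
  have r: "fps_conv_radius (fps_shift 2 Fe) = \<infinity>" using Fe_radius by simp
  have "hfun z = eval_fps (fps_const 2 * fps_shift 2 Fe) z - 1"
    unfolding hfun_def Hc_alt
    by (subst eval_fps_diff) (simp_all add: r Fe_radius fps_conv_radius_cmult_left)
  also have "eval_fps (fps_const 2 * fps_shift 2 Fe) z = 2 * eval_fps (fps_shift 2 Fe) z"
    by (subst eval_fps_mult) (simp_all add: r Fe_radius)
  also have "eval_fps (fps_shift 2 Fe) z = (exp z - 1 - z) / z^2"
    using z by (subst eval_fps_shift) (simp_all add: Fe_subdegree Fe_radius eval_Fe)
  finally show ?thesis by simp
qed

lemma hfun_0 [simp]: "hfun 0 = 0"
  by (simp add: hfun_def eval_fps_at_0)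

lemma hfun_analytic: "hfun analytic_on A"
  unfolding hfun_def by (rule FPS_Convergence.analytic_on_eval_fps) (simp add: Hc_radius)

lemma hfun_fps: "hfun has_fps_expansion Hc"
  unfolding hfun_def by (rule eval_fps_has_fps_expansion) (simp add: Hc_radius)

definition qr :: "real \<Rightarrow> real" where
  "qr x = (if x = 0 then 1 else 2 * (exp x - 1 - x) / x^2)"

lemma qr_pos: "qr x > 0"
  using exp_gt_1_plus[of x] by (auto simp: qr_def)

lemma hfun_real: "1 + hfun (of_real x) = of_real (qr x)"
proof (cases "x = 0")
  case True thus ?thesis by (simp add: qr_def)
next
  case False
  thus ?thesis by (simp add: hfun_eq qr_def exp_of_real[symmetric])
qed

definition ufun :: "complex \<Rightarrow> complex" where
  "ufun z = z * (1 + hfun z) powr (1/2)"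

definition ur :: "real \<Rightarrow> real" where
  "ur x = x * sqrt (qr x)"

lemma ufun_real: "ufun (of_real x) = of_real (ur x)"
proof -
  have "(1 + hfun (of_real x)) powr (1/2) = of_real (qr x) powr (of_real (1/2))"
    by (simp add: hfun_real)
  also have "\<dots> = of_real (qr x powr (1/2))"
    using qr_pos[of x] by (intro powr_of_real) simp
  also have "\<dots> = of_real (sqrt (qr x))"
    using qr_pos[of x] by (simp add: powr_half_sqrt)
  finally show ?thesis by (simp add: ufun_def ur_def)
qed

lemma ur_sq: "ur x ^ 2 = 2 * (exp x - 1 - x)"
  using qr_pos[of x] by (auto simp: ur_def qr_def power_mult_distrib)

lemma ptilde_ur: "ptilde x = - (ur x ^ 2) / 2"
  by (simp add: ur_sq ptilde_def)

lemma ufun_analytic: "ufun analytic_on \<real>"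
proof -
  have "(\<lambda>z. (1 + hfun z) powr (1/2)) analytic_on \<real>"
  proof (rule analytic_on_powr)
    show "(\<lambda>z. 1 + hfun z) analytic_on \<real>" by (intro analytic_intros hfun_analytic)
    show "(\<lambda>z. 1/2) analytic_on \<real>" by (intro analytic_intros)
    fix z :: complex assume "z \<in> \<real>"
    then obtain x where x: "z = of_real x" by (auto elim: Reals_cases)
    show "1 + hfun z \<notin> \<real>\<^sub>\<le>\<^sub>0" unfolding x hfun_real using qr_pos[of x]
      by (auto simp: nonpos_Reals_def)
  qed
  thus ?thesis unfolding ufun_def by (intro analytic_on_mult analytic_on_ident)
qed

lemma ufun_fps: "ufun has_fps_expansion (fps_X * Ef (1/2))"
proof -
  have "((\<lambda>x. (1 + x) powr (1/2)) \<circ> hfun) has_fps_expansion fps_compose (fps_binomial (1/2)) Hc"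
    by (rule has_fps_expansion_compose[OF has_fps_expansion_binomial_complex hfun_fps]) simp
  hence "(\<lambda>z. (1 + hfun z) powr (1/2)) has_fps_expansion Ef (1/2)"
    by (simp add: Ef_def o_def)
  from has_fps_expansion_mult[OF has_fps_expansion_fps_X this]
  show ?thesis unfolding ufun_def .
qed

definition du :: "complex \<Rightarrow> complex" where "du = deriv ufun"

lemma du_analytic: "du analytic_on \<real>"
  unfolding du_def by (intro analytic_intros ufun_analytic)

lemma du_fps: "du has_fps_expansion fps_deriv (fps_X * Ef (1/2))"
  unfolding du_def by (rule has_fps_expansion_deriv[OF ufun_fps])

lemma ufun_deriv: "x \<in> \<real> \<Longrightarrow> (ufun has_field_derivative du x) (at x)"
  unfolding du_def using ufun_analytic
  by (metis DERIV_deriv_iff_field_differentiable analytic_on_imp_differentiable_at)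

definition urd :: "real \<Rightarrow> real" where "urd x = Re (du (of_real x))"

lemma du_real: "du (of_real x) = of_real (urd x)"
proof -
  have d: "((\<lambda>t. ufun (of_real t)) has_vector_derivative du (of_real x)) (at x)"
    by (rule has_vector_derivative_real_field, rule ufun_deriv) simp
  have "((\<lambda>t. Im (ufun (of_real t))) has_field_derivative Im (du (of_real x))) (at x)"
    by (rule has_field_derivative_Im[OF d])
  moreover have "((\<lambda>t. Im (ufun (of_real t))) has_field_derivative 0) (at x)"
    by (simp add: ufun_real)
  ultimately have "Im (du (of_real x)) = 0" by (rule DERIV_unique)
  thus ?thesis unfolding urd_def by (simp add: complex_eq_iff)
qed

lemma ur_deriv: "(ur has_real_derivative urd x) (at x)"
proof -
  have d: "((\<lambda>t. ufun (of_real t)) has_vector_derivative du (of_real x)) (at x)"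
    by (rule has_vector_derivative_real_field, rule ufun_deriv) simp
  have "((\<lambda>t. Re (ufun (of_real t))) has_field_derivative Re (du (of_real x))) (at x)"
    by (rule has_field_derivative_Re[OF d])
  thus ?thesis by (simp add: ufun_real urd_def)
qed


definition Phi :: "complex \<Rightarrow> nat \<Rightarrow> complex \<Rightarrow> complex" where
  "Phi v S z = exp (v * z) - (\<Sum>s<S. cc v s * (ufun z ^ s * du z))"

definition Dfps :: "complex \<Rightarrow> nat \<Rightarrow> complex fps" where
  "Dfps v S = fps_exp v - (\<Sum>s<S. fps_const (cc v s) *
       ((fps_X * Ef (1/2))^s * fps_deriv (fps_X * Ef (1/2))))"

lemma Phi_fps: "Phi v S has_fps_expansion Dfps v S"
  unfolding Phi_def Dfps_def
  by (intro has_fps_expansion_diff has_fps_expansion_exp has_fps_expansion_sum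
        has_fps_expansion_cmult_left has_fps_expansion_mult has_fps_expansion_power
        ufun_fps du_fps)

lemma Dfps_nth: "j < S \<Longrightarrow> fps_nth (Dfps v S) j = 0"
  unfolding Dfps_def cc_def by (rule lag_main[OF Ef_half0])

lemma Dfps_split: "Dfps v S = fps_X ^ S * fps_shift S (Dfps v S)"
  by (auto simp: fps_eq_iff fps_X_power_mult_nth Dfps_nth)

lemma Phi_local: "\<exists>r>0. \<exists>M. \<forall>z. norm z < r \<longrightarrow> norm (Phi v S z) \<le> M * norm z ^ S"
proof -
  define D where "D = Dfps v S"
  define E where "E = fps_shift S D"
  have R: "fps_conv_radius D > 0" and ev: "eventually (\<lambda>z. eval_fps D z = Phi v S z) (nhds 0)"
    using Phi_fps[of v S] unfolding has_fps_expansion_def D_def by auto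
  have RE: "fps_conv_radius E = fps_conv_radius D" unfolding E_def by simp
  have ev2: "eventually (\<lambda>z. z \<in> eball 0 (fps_conv_radius D)) (nhds 0)"
    using R by (intro eventually_nhds_in_open) (auto simp: zero_ereal_def)
  have "isCont (eval_fps E) 0"
    using R RE by (intro continuous_eval_fps) (auto simp: zero_ereal_def)
  hence "eval_fps E \<midarrow>0\<rightarrow> eval_fps E 0" by (simp add: isCont_def)
  from LIM_D[OF this zero_less_one] obtain d1 where d1: "d1 > 0"
    "\<And>z. z \<noteq> 0 \<and> norm (z - 0) < d1 \<longrightarrow> norm (eval_fps E z - eval_fps E 0) < 1" by blast
  from eventually_conj[OF ev ev2] obtain d2 where d2: "d2 > 0"
    "\<And>z. dist z 0 < d2 \<Longrightarrow> eval_fps D z = Phi v S z \<and> z \<in> eball 0 (fps_conv_radius D)"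
    unfolding eventually_nhds_metric by blast
  define M where "M = norm (eval_fps E 0) + 1"
  show ?thesis
  proof (rule exI[of _ "min d1 d2"], intro conjI exI[of _ M] allI impI)
    show "min d1 d2 > 0" using d1 d2 by simp
    fix z :: complex assume z: "norm z < min d1 d2"
    have zD: "eval_fps D z = Phi v S z" and zR: "ereal (norm z) < fps_conv_radius D"
      using d2(2)[of z] z by auto
    have "eval_fps D z = eval_fps (fps_X ^ S) z * eval_fps E z"
      unfolding E_def D_def using zR unfolding D_def
      by (subst Dfps_split, subst eval_fps_mult) auto
    hence eq: "Phi v S z = z ^ S * eval_fps E z" using zD by simp
    have "norm (eval_fps E z) \<le> M"
    proof (cases "z = 0")
      case True thus ?thesis by (simp add: M_def)
    next
      case False
      hence "norm (eval_fps E z - eval_fps E 0) < 1" using d1(2)[of z] z by auto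
      thus ?thesis unfolding M_def by (metis add.commute diff_add_cancel le_less_trans norm_triangle_ineq less_imp_le add_less_cancel_left)
    qed
    hence "norm z ^ S * norm (eval_fps E z) \<le> norm z ^ S * M" by (intro mult_left_mono) auto
    thus "norm (Phi v S z) \<le> M * norm z ^ S" unfolding eq by (simp add: norm_mult norm_power mult.commute)
  qed
qed

lemma Phi_analytic: "Phi v S analytic_on \<real>"
  unfolding Phi_def
  by (intro analytic_intros ufun_analytic du_analytic)

lemma Phi_cont: "continuous_on {-2..2} (\<lambda>x. Phi v S (of_real x))"
proof -
  have "continuous_on \<real> (Phi v S)"
    by (rule holomorphic_on_imp_continuous_on analytic_imp_holomorphic Phi_analytic)+
  thus ?thesis
    by (rule continuous_on_compose2) (auto intro!: continuous_intros)
qed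

lemma Phi_bound: "\<exists>M. \<forall>x\<in>{-2..2}. norm (Phi v S (of_real x)) \<le> M * \<bar>x\<bar> ^ S"
proof -
  obtain r M1 where r: "r > 0" and M1: "\<And>z. norm z < r \<Longrightarrow> norm (Phi v S z) \<le> M1 * norm z ^ S"
    using Phi_local[of v S] by blast
  have "compact ((\<lambda>x. Phi v S (of_real x)) ` {-2..2})"
    by (rule compact_continuous_image[OF Phi_cont]) simp
  hence "bounded ((\<lambda>x. Phi v S (of_real x)) ` {-2..2})" by (rule compact_imp_bounded)
  then obtain B where B0: "\<forall>y\<in>(\<lambda>x. Phi v S (of_real x)) ` {-2..2}. norm y \<le> B"
    unfolding bounded_iff by blast
  have B: "\<And>x. x \<in> {-2..2} \<Longrightarrow> norm (Phi v S (of_real x)) \<le> B"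
    using B0 by blast
  define B' where "B' = max B 0"
  show ?thesis
  proof (intro exI[of _ "max M1 (B' / r ^ S)"] ballI)
    fix x :: real assume x: "x \<in> {-2..2}"
    show "norm (Phi v S (of_real x)) \<le> max M1 (B' / r ^ S) * \<bar>x\<bar> ^ S"
    proof (cases "\<bar>x\<bar> < r")
      case True
      hence "norm (Phi v S (of_real x)) \<le> M1 * \<bar>x\<bar> ^ S" using M1[of "of_real x"] by simp
      also have "\<dots> \<le> max M1 (B' / r ^ S) * \<bar>x\<bar> ^ S" by (intro mult_right_mono) auto
      finally show ?thesis .
    next
      case False
      have "r ^ S \<le> \<bar>x\<bar> ^ S" using False r by (intro power_mono) auto
      have "norm (Phi v S (of_real x)) \<le> B'" using B[OF x] unfolding B'_def by linarith
      also have "B' = (B' / r ^ S) * r ^ S" using r by simp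
      also have "\<dots> \<le> (B' / r ^ S) * \<bar>x\<bar> ^ S"
        using \<open>r ^ S \<le> \<bar>x\<bar> ^ S\<close> r unfolding B'_def by (intro mult_left_mono) auto
      also have "\<dots> \<le> max M1 (B' / r ^ S) * \<bar>x\<bar> ^ S" by (intro mult_right_mono) auto
      finally show ?thesis .
    qed
  qed
qed

lemma qr_cont: "continuous_on A qr"
proof -
  have c: "continuous_on UNIV hfun"
    by (rule holomorphic_on_imp_continuous_on, rule analytic_imp_holomorphic, rule hfun_analytic)
  have "continuous_on A (\<lambda>x. hfun (of_real x))"
    by (rule continuous_on_compose2[OF c]) (auto intro!: continuous_intros)
  hence "continuous_on A (\<lambda>x. Re (1 + hfun (of_real x)))"
    by (intro continuous_intros)
  thus ?thesis by (simp add: hfun_real)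
qed

lemma ur_lower: "\<exists>c>0. \<forall>x\<in>{-2..2}. c * x^2 \<le> ur x ^ 2"
proof -
  obtain x0 where x0: "x0 \<in> {-2..2}" "\<And>y. y \<in> {-2..2} \<Longrightarrow> qr x0 \<le> qr y"
    using continuous_attains_inf[of "{-2..2::real}" qr] qr_cont by auto
  show ?thesis
  proof (intro exI[of _ "qr x0"] conjI ballI)
    show "qr x0 > 0" by (rule qr_pos)
    fix x :: real assume x: "x \<in> {-2..2}"
    have "ur x ^ 2 = x^2 * qr x" using qr_pos[of x] by (simp add: ur_def power_mult_distrib)
    thus "qr x0 * x^2 \<le> ur x ^ 2" using x0(2)[OF x] mult_right_mono[of "qr x0" "qr x" "x^2"] by (simp add: mult.commute)
  qed
qed


lemma ur_cont: "continuous_on A ur"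
  using ur_deriv by (meson DERIV_isCont continuous_at_imp_continuous_on)

definition fs :: "nat \<Rightarrow> nat \<Rightarrow> real \<Rightarrow> real" where
  "fs n s y = exp (-(real n / 2) * y^2) * y^s"

definition integrand :: "complex \<Rightarrow> nat \<Rightarrow> real \<Rightarrow> complex" where
  "integrand v n z = exp (complex_of_real (real n * ptilde z)) * exp (v * complex_of_real z)"

definition Rint :: "complex \<Rightarrow> nat \<Rightarrow> nat \<Rightarrow> real \<Rightarrow> real \<Rightarrow> complex" where
  "Rint v S n a b = integral {a..b} (\<lambda>z. of_real (exp (-(real n/2) * ur z ^ 2)) * Phi v S (of_real z))"

lemma integrand_eq:
  "integrand v n z = (\<Sum>s<S. cc v s * of_real (urd z * fs n s (ur z)))
      + of_real (exp (-(real n/2) * ur z ^ 2)) * Phi v S (of_real z)"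
proof -
  have e1: "exp (complex_of_real (real n * ptilde z)) = of_real (exp (-(real n/2) * ur z ^ 2))"
    by (simp add: ptilde_ur exp_of_real[symmetric])
  have e2: "exp (v * complex_of_real z) = Phi v S (of_real z)
       + (\<Sum>s<S. cc v s * (of_real (ur z) ^ s * of_real (urd z)))"
    by (simp add: Phi_def ufun_real du_real)
  show ?thesis unfolding integrand_def e1 e2
    by (simp add: fs_def algebra_simps sum_distrib_left)
qed

lemma integrand_decomp:
  assumes ab: "a \<le> b" "{a..b} \<subseteq> {-2..2}" and u: "ur a \<le> ur b"
  shows "(integrand v n has_integral
     (\<Sum>s<S. cc v s * of_real (integral {ur a..ur b} (fs n s))) + Rint v S n a b) {a..b}"
proof -
  have "compact (ur ` {a..b})" by (rule compact_continuous_image[OF ur_cont]) simp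
  hence "bounded (ur ` {a..b})" by (rule compact_imp_bounded)
  then obtain Bd where Bd0: "\<forall>y\<in>ur ` {a..b}. norm y \<le> Bd" unfolding bounded_iff by blast
  have sub: "ur ` {a..b} \<subseteq> {-Bd..Bd}" using Bd0 by (auto simp: abs_le_iff)
  have I1: "((\<lambda>z. urd z *\<^sub>R fs n s (ur z)) has_integral integral {ur a..ur b} (fs n s)) {a..b}" for s
    by (rule has_integral_substitution[OF ab(1) u sub])
       (auto simp: fs_def intro!: continuous_intros has_field_derivative_at_within ur_deriv)
  have I2: "((\<lambda>z. \<Sum>s<S. cc v s * of_real (urd z * fs n s (ur z))) has_integral
      (\<Sum>s<S. cc v s * of_real (integral {ur a..ur b} (fs n s)))) {a..b}"
    by (intro has_integral_sum finite_lessThan has_integral_mult_right has_integral_of_real)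
       (use I1 in simp)
  have cont: "continuous_on {a..b} (\<lambda>z. of_real (exp (-(real n/2) * ur z ^ 2)) * Phi v S (of_real z))"
    by (intro continuous_intros continuous_on_subset[OF Phi_cont ab(2)] continuous_on_compose2[OF ur_cont])
       auto
  have I3: "((\<lambda>z. of_real (exp (-(real n/2) * ur z ^ 2)) * Phi v S (of_real z)) has_integral Rint v S n a b) {a..b}"
    unfolding Rint_def by (rule integrable_integral, rule integrable_continuous_interval[OF cont])
  show ?thesis
    by (rule has_integral_eq[OF _ has_integral_add[OF I2 I3]], rule integrand_eq[symmetric])
qed


lemma main_term:
  fixes L :: real and n s S :: nat
  assumes L: "L > 0" and n: "n \<ge> 1"
  shows "norm (cc v s * of_real (integral {0..L} (fs n s))
            - of_real (Gamma ((real s + 1) / 2) / real n powr ((real s + 1) / 2)) * beta_tilde s v)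
         \<le> norm (cc v s) * 2 powr ((real s - 1) / 2) * Gamma ((real s + 1) / 2 + real S) * (2 / L^2)^S
            / real n powr ((real s + 1) / 2 + real S)"
proof -
  define a where "a = (real s + 1) / 2"
  define lam where "lam = real n / 2"
  define K where "K = integral {0..L} (fs n s)"
  define e where "e = Gamma a - 2 * lam powr a * K"
  have lam: "lam > 0" using n unfolding lam_def by simp
  have npos: "real n > 0" using n by simp
  have fsK: "K = integral {0..L} (\<lambda>y. exp (-lam*y^2) * y^s)"
    unfolding K_def lam_def fs_def by simp
  have e0: "0 \<le> e" and e1: "e \<le> Gamma (a + real S) / (lam * L^2)^S"
    using gauss_trunc(1)[OF lam L, of s] gauss_trunc(2)[OF lam L, of s S] unfolding e_def fsK a_def by auto
  have lama: "2 * lam powr a = real n powr a / 2 powr ((real s - 1) / 2)"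
  proof -
    have "lam powr a = real n powr a / 2 powr a" unfolding lam_def using npos by (simp add: powr_divide)
    moreover have "2 powr a = 2 * 2 powr ((real s - 1) / 2)"
    proof -
      have "a = 1 + (real s - 1) / 2" unfolding a_def by (simp add: field_simps)
      thus ?thesis by (simp add: powr_add)
    qed
    ultimately show ?thesis by simp
  qed
  have Keq: "K = 2 powr ((real s - 1) / 2) / real n powr a * (Gamma a - e)"
    unfolding e_def lama using npos by (simp add: field_simps)
  have "cc v s * of_real K - of_real (Gamma a / real n powr a) * beta_tilde s v
      = - of_real (2 powr ((real s - 1) / 2) / real n powr a * e) * cc v s"
  proof -
    have nz: "complex_of_real (real n powr a) \<noteq> 0" using npos by simp
    show ?thesis unfolding Keq cc_beta[symmetric] using nz by (simp add: field_simps)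
  qed
  hence "norm (cc v s * of_real K - of_real (Gamma a / real n powr a) * beta_tilde s v)
      = 2 powr ((real s - 1) / 2) / real n powr a * e * norm (cc v s)"
    using e0 npos by (simp add: norm_mult norm_divide abs_mult)
  also have "\<dots> \<le> 2 powr ((real s - 1) / 2) / real n powr a * (Gamma (a + real S) / (lam * L^2)^S) * norm (cc v s)"
    using e1 by (intro mult_right_mono mult_left_mono) auto
  also have "(lam * L^2)^S = real n ^ S / (2 / L^2)^S"
    unfolding lam_def using L by (simp add: power_mult_distrib power_divide field_simps)
  also have "2 powr ((real s - 1) / 2) / real n powr a * (Gamma (a + real S) / (real n ^ S / (2 / L^2)^S)) * norm (cc v s)
      = norm (cc v s) * 2 powr ((real s - 1) / 2) * Gamma (a + real S) * (2 / L^2)^S / (real n powr a * real n ^ S)"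
    by (simp add: field_simps)
  also have "real n powr a * real n ^ S = real n powr (a + real S)"
    using npos by (simp add: powr_add powr_realpow)
  finally show ?thesis unfolding a_def K_def .
qed

lemma R_bound:
  assumes c: "c > 0" "\<forall>x\<in>{-2..2}. c * x^2 \<le> ur x ^ 2"
    and M: "\<forall>x\<in>{-2..2}. norm (Phi v S (of_real x)) \<le> M * \<bar>x\<bar>^S"
    and ab: "{a..b} \<subseteq> {-2..2}"
  shows "norm (Rint v S n a b) \<le> integral {a..b} (\<lambda>z. M * (exp (-(real n * c / 2) * z^2) * \<bar>z\<bar>^S))"
  unfolding Rint_def
proof (rule integral_norm_bound_integral)
  show "(\<lambda>z. of_real (exp (-(real n/2) * ur z ^ 2)) * Phi v S (of_real z)) integrable_on {a..b}"
    by (intro integrable_continuous_interval continuous_intros continuous_on_subset[OF Phi_cont ab]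
          continuous_on_compose2[OF ur_cont]) auto
  show "(\<lambda>z. M * (exp (-(real n * c / 2) * z^2) * \<bar>z\<bar>^S)) integrable_on {a..b}"
    by (intro integrable_continuous_interval continuous_intros)
  fix z assume z: "z \<in> {a..b}"
  hence z2: "z \<in> {-2..2}" using ab by auto
  have "real n * c / 2 * z^2 \<le> real n / 2 * ur z ^ 2"
    using c(2) z2 by (simp add: mult.assoc mult_left_mono)
  hence ex: "exp (-(real n/2) * ur z ^ 2) \<le> exp (-(real n * c / 2) * z^2)" by simp
  have "norm (of_real (exp (-(real n/2) * ur z ^ 2)) * Phi v S (of_real z))
      = exp (-(real n/2) * ur z ^ 2) * norm (Phi v S (of_real z))" by (simp add: norm_mult)
  also have "\<dots> \<le> exp (-(real n * c / 2) * z^2) * (M * \<bar>z\<bar>^S)"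
    using M z2 ex by (intro mult_mono) auto
  finally show "norm (of_real (exp (-(real n/2) * ur z ^ 2)) * Phi v S (of_real z))
      \<le> M * (exp (-(real n * c / 2) * z^2) * \<bar>z\<bar>^S)" by (simp add: algebra_simps)
qed

lemma R02:
  assumes c: "c > 0" and M: "M \<ge> 0" and n: "n \<ge> 1"
  shows "integral {0..2} (\<lambda>z. M * (exp (-(real n * c / 2) * z^2) * \<bar>z\<bar>^S))
     \<le> (M * Gamma ((real S + 1)/2) / (2 * (c/2) powr ((real S + 1)/2))) / real n powr ((real S + 1)/2)"
proof -
  define lam where "lam = real n * c / 2"
  define a where "a = (real S + 1)/2"
  have lam: "lam > 0" using c n unfolding lam_def by simp
  have "integral {0..2} (\<lambda>z. M * (exp (-(real n * c / 2) * z^2) * \<bar>z\<bar>^S))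
      = integral {0..2} (\<lambda>z. M * (exp (-lam * z^2) * z^S))"
    unfolding lam_def by (intro integral_cong) auto
  also have "\<dots> = M * integral {0..2} (\<lambda>z. exp (-lam * z^2) * z^S)" by simp
  also have "\<dots> \<le> M * (Gamma a / (2 * lam powr a))"
  proof (intro mult_left_mono M)
    have "0 \<le> Gamma a - 2 * lam powr a * integral {0..2} (\<lambda>z. exp (-lam * z^2) * z^S)"
      using gauss_trunc(1)[OF lam, of 2 S] unfolding a_def by simp
    thus "integral {0..2} (\<lambda>z. exp (-lam * z^2) * z^S) \<le> Gamma a / (2 * lam powr a)"
      using lam by (simp add: field_simps)
  qed
  also have "lam powr a = real n powr a * (c/2) powr a"
    unfolding lam_def using c by (simp add: powr_mult[symmetric])
  also have "M * (Gamma a / (2 * (real n powr a * (c/2) powr a)))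
     = (M * Gamma a / (2 * (c/2) powr a)) / real n powr a"
    by (simp add: field_simps)
  finally show ?thesis unfolding a_def .
qed


lemma half_generic:
  fixes a b L B :: real and sg :: "nat \<Rightarrow> complex"
  assumes ab: "a \<le> b" "{a..b} \<subseteq> {-2..2}" "ur a \<le> ur b" and L: "L > 0"
    and sg: "\<And>s. norm (sg s) = 1"
    and K: "\<And>n s. of_real (integral {ur a..ur b} (fs n s)) = sg s * of_real (integral {0..L} (fs n s))"
    and R: "\<And>n. n \<ge> 1 \<Longrightarrow> norm (Rint v S n a b) \<le> B / real n powr ((real S + 1)/2)"
  shows "(\<lambda>n::nat. norm (integral {a..b} (\<lambda>z. exp (complex_of_real (real n * ptilde z)) * exp (v * complex_of_real z))
           - (\<Sum>s<S. complex_of_real (Gamma ((real s + 1) / 2) / real n powr ((real s + 1) / 2)) * sg s * beta_tilde s v)))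
         \<in> O(\<lambda>n. 1 / real n powr ((real S + 1) / 2))"
proof -
  define A where "A = (\<lambda>s::nat. norm (cc v s) * 2 powr ((real s - 1) / 2) * Gamma ((real s + 1) / 2 + real S) * (2 / L^2)^S)"
  define C where "C = (\<Sum>s<S. A s) + B"
  define aS where "aS = (real S + 1) / 2"
  show ?thesis
  proof (rule bigoI[of _ C])
    show "eventually (\<lambda>n. norm (norm (integral {a..b} (\<lambda>z. exp (complex_of_real (real n * ptilde z)) * exp (v * complex_of_real z))
           - (\<Sum>s<S. complex_of_real (Gamma ((real s + 1) / 2) / real n powr ((real s + 1) / 2)) * sg s * beta_tilde s v)))
          \<le> C * norm (1 / real n powr ((real S + 1) / 2))) at_top"
      unfolding eventually_at_top_linorder
    proof (intro exI[of _ 1] allI impI)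
      fix n :: nat assume n: "n \<ge> 1"
      have npos: "real n > 0" using n by simp
      define G where "G = (\<lambda>s::nat. complex_of_real (Gamma ((real s + 1) / 2) / real n powr ((real s + 1) / 2)))"
      define KK where "KK = (\<lambda>s. integral {0..L} (fs n s))"
      have I: "integral {a..b} (\<lambda>z. exp (complex_of_real (real n * ptilde z)) * exp (v * complex_of_real z))
          = (\<Sum>s<S. cc v s * of_real (integral {ur a..ur b} (fs n s))) + Rint v S n a b"
        using integrand_decomp[OF ab, of v n S] unfolding integrand_def by (rule integral_unique)
      have E: "integral {a..b} (\<lambda>z. exp (complex_of_real (real n * ptilde z)) * exp (v * complex_of_real z))
           - (\<Sum>s<S. G s * sg s * beta_tilde s v)
          = (\<Sum>s<S. sg s * (cc v s * of_real (KK s) - G s * beta_tilde s v)) + Rint v S n a b"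
      proof -
        have "(\<Sum>s<S. cc v s * of_real (integral {ur a..ur b} (fs n s))) - (\<Sum>s<S. G s * sg s * beta_tilde s v)
            = (\<Sum>s<S. sg s * (cc v s * of_real (KK s) - G s * beta_tilde s v))"
          unfolding sum_subtractf[symmetric] K KK_def by (intro sum.cong refl) (simp add: algebra_simps)
        thus ?thesis unfolding I by (simp add: algebra_simps)
      qed
      have np: "real n powr aS > 0" using npos by simp
      have T: "norm (sg s * (cc v s * of_real (KK s) - G s * beta_tilde s v)) \<le> A s / real n powr aS" if "s < S" for s
      proof -
        have "norm (sg s * (cc v s * of_real (KK s) - G s * beta_tilde s v))
            = norm (cc v s * of_real (KK s) - G s * beta_tilde s v)" by (simp add: norm_mult sg)
        also have "\<dots> \<le> A s / real n powr ((real s + 1) / 2 + real S)"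
          unfolding A_def KK_def G_def by (rule main_term[OF L n])
        also have "\<dots> \<le> A s / real n powr aS"
        proof (rule divide_left_mono)
          show "0 \<le> A s" unfolding A_def by (intro mult_nonneg_nonneg) (auto intro!: Gamma_real_pos[THEN less_imp_le] add_pos_nonneg)
          show "real n powr aS \<le> real n powr ((real s + 1) / 2 + real S)"
            using n by (intro powr_mono) (auto simp: aS_def field_simps)
          show "0 < real n powr ((real s + 1) / 2 + real S) * real n powr aS" using np npos by simp
        qed
        finally show ?thesis .
      qed
      have "norm (integral {a..b} (\<lambda>z. exp (complex_of_real (real n * ptilde z)) * exp (v * complex_of_real z))
           - (\<Sum>s<S. G s * sg s * beta_tilde s v))
          \<le> (\<Sum>s<S. norm (sg s * (cc v s * of_real (KK s) - G s * beta_tilde s v))) + norm (Rint v S n a b)"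
        unfolding E by (rule order.trans[OF norm_triangle_ineq add_right_mono[OF norm_sum]])
      also have "\<dots> \<le> (\<Sum>s<S. A s / real n powr aS) + B / real n powr aS"
        using R[OF n] unfolding aS_def[symmetric] by (intro add_mono sum_mono T) auto
      also have "\<dots> = C * norm (1 / real n powr aS)"
        unfolding C_def using np by (simp add: sum_divide_distrib[symmetric] field_simps)
      finally show "norm (norm (integral {a..b} (\<lambda>z. exp (complex_of_real (real n * ptilde z)) * exp (v * complex_of_real z))
           - (\<Sum>s<S. complex_of_real (Gamma ((real s + 1) / 2) / real n powr ((real s + 1) / 2)) * sg s * beta_tilde s v)))
          \<le> C * norm (1 / real n powr ((real S + 1) / 2))"
        unfolding G_def aS_def by simp
    qed
  qed
qed

lemma ur_0 [simp]: "ur 0 = 0" by (simp add: ur_def)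
lemma ur_2: "ur 2 > 0" using qr_pos[of 2] by (simp add: ur_def)
lemma ur_m2: "ur (-2) < 0"
proof -
  have "sqrt (qr (-2)) > 0" using qr_pos[of "-2"] by (rule real_sqrt_gt_zero)
  moreover have "ur (-2) = - (2 * sqrt (qr (-2)))" unfolding ur_def by (rule mult_minus_left)
  ultimately show ?thesis by linarith
qed

lemma fs_neg: "fs n s (-x) = (-1)^s * fs n s x"
  unfolding fs_def power_minus[of x s] by simp

lemma m1sq: "(-1::real)^s * (-1)^s = 1"
  by (simp add: power_mult_distrib[symmetric])

theorem proposition6p2:
  fixes v :: complex and S :: nat
  assumes "S \<ge> 1"
  shows "(\<lambda>n::nat. norm (integral {-2..0::real}
             (\<lambda>z. exp (complex_of_real (real n * ptilde z)) * exp (v * complex_of_real z))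
           - (\<Sum>s<S. complex_of_real (Gamma ((real s + 1) / 2) / real n powr ((real s + 1) / 2))
                     * (-1) ^ s * beta_tilde s v)))
         \<in> O(\<lambda>n. 1 / real n powr ((real S + 1) / 2))
       \<and> (\<lambda>n::nat. norm (integral {0..2::real}
             (\<lambda>z. exp (complex_of_real (real n * ptilde z)) * exp (v * complex_of_real z))
           - (\<Sum>s<S. complex_of_real (Gamma ((real s + 1) / 2) / real n powr ((real s + 1) / 2))
                     * beta_tilde s v)))
         \<in> O(\<lambda>n. 1 / real n powr ((real S + 1) / 2))"
proof -
  obtain M0 where M0: "\<forall>x\<in>{-2..2}. norm (Phi v S (of_real x)) \<le> M0 * \<bar>x\<bar> ^ S"
    using Phi_bound[of v S] by blast
  define M where "M = max M0 0"
  have M: "\<forall>x\<in>{-2..2}. norm (Phi v S (of_real x)) \<le> M * \<bar>x\<bar> ^ S"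
  proof
    fix x :: real assume "x \<in> {-2..2}"
    hence "norm (Phi v S (of_real x)) \<le> M0 * \<bar>x\<bar> ^ S" using M0 by blast
    also have "\<dots> \<le> M * \<bar>x\<bar> ^ S" unfolding M_def by (intro mult_right_mono) auto
    finally show "norm (Phi v S (of_real x)) \<le> M * \<bar>x\<bar> ^ S" .
  qed
  have M_nn: "M \<ge> 0" unfolding M_def by simp
  obtain c where c: "c > 0" "\<forall>x\<in>{-2..2}. c * x^2 \<le> ur x ^ 2" using ur_lower by blast
  define B where "B = M * Gamma ((real S + 1)/2) / (2 * (c/2) powr ((real S + 1)/2))"
  have pos: "(\<lambda>n::nat. norm (integral {0..2::real}
             (\<lambda>z. exp (complex_of_real (real n * ptilde z)) * exp (v * complex_of_real z))
           - (\<Sum>s<S. complex_of_real (Gamma ((real s + 1) / 2) / real n powr ((real s + 1) / 2))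
                     * 1 * beta_tilde s v)))
         \<in> O(\<lambda>n. 1 / real n powr ((real S + 1) / 2))"
  proof (rule half_generic[where L = "ur 2" and B = B])
    show "0 \<le> (2::real)" by simp
    show "{0..2} \<subseteq> {-2..2::real}" by auto
    show "ur 0 \<le> ur 2" using ur_2 by simp
    show "ur 2 > 0" by (rule ur_2)
    show "norm (1::complex) = 1" by simp
    show "of_real (integral {ur 0..ur 2} (fs n s)) = 1 * complex_of_real (integral {0..ur 2} (fs n s))" for n s
      by simp
    fix n :: nat assume n: "n \<ge> 1"
    have "norm (Rint v S n 0 2) \<le> integral {0..2} (\<lambda>z. M * (exp (-(real n * c / 2) * z^2) * \<bar>z\<bar>^S))"
      by (rule R_bound[OF c M]) auto
    also have "\<dots> \<le> B / real n powr ((real S + 1)/2)"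
      unfolding B_def by (rule R02[OF c(1) M_nn n])
    finally show "norm (Rint v S n 0 2) \<le> B / real n powr ((real S + 1)/2)" .
  qed
  have neg: "(\<lambda>n::nat. norm (integral {-2..0::real}
             (\<lambda>z. exp (complex_of_real (real n * ptilde z)) * exp (v * complex_of_real z))
           - (\<Sum>s<S. complex_of_real (Gamma ((real s + 1) / 2) / real n powr ((real s + 1) / 2))
                     * (-1) ^ s * beta_tilde s v)))
         \<in> O(\<lambda>n. 1 / real n powr ((real S + 1) / 2))"
  proof (rule half_generic[where L = "- ur (-2)" and B = B])
    show "-2 \<le> (0::real)" by simp
    show "{-2..0} \<subseteq> {-2..2::real}" by auto
    show "ur (-2) \<le> ur 0" using ur_m2 by simp
    show "- ur (-2) > 0" using ur_m2 by simp
    show "norm ((-1)^s :: complex) = 1" for s by (simp add: norm_power)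
    show "of_real (integral {ur (-2)..ur 0} (fs n s)) = (-1)^s * complex_of_real (integral {0..- ur (-2)} (fs n s))" for n s
    proof -
      have fsx: "fs n s = (\<lambda>x. (\<lambda>y. (-1)^s * fs n s y) (- x))"
        by (auto simp: fun_eq_iff fs_neg mult.assoc[symmetric] m1sq)
      have "integral {ur (-2)..ur 0} (fs n s) = integral {- (- ur (-2))..- 0} (fs n s)" by simp
      also have "\<dots> = integral {- (- ur (-2))..- 0} (\<lambda>x. (-1)^s * fs n s (- x))"
        by (rule arg_cong[OF fsx])
      also have "\<dots> = integral {0..- ur (-2)} (\<lambda>y. (-1)^s * fs n s y)"
        by (rule Henstock_Kurzweil_Integration.integral_reflect_real[where f="\<lambda>y. (-1)^s * fs n s y"])
      also have "\<dots> = (-1)^s * integral {0..- ur (-2)} (fs n s)" by simp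
      finally show ?thesis by simp
    qed
    fix n :: nat assume n: "n \<ge> 1"
    have "norm (Rint v S n (-2) 0) \<le> integral {-2..0} (\<lambda>z. M * (exp (-(real n * c / 2) * z^2) * \<bar>z\<bar>^S))"
      by (rule R_bound[OF c M]) auto
    also have "integral {-2..0} (\<lambda>z. M * (exp (-(real n * c / 2) * z^2) * \<bar>z\<bar>^S))
        = integral {- 2..- 0} (\<lambda>z. (\<lambda>y. M * (exp (-(real n * c / 2) * y^2) * \<bar>y\<bar>^S)) (- z))"
      by simp
    also have "\<dots> = integral {0..2} (\<lambda>z. M * (exp (-(real n * c / 2) * z^2) * \<bar>z\<bar>^S))"
      by (rule Henstock_Kurzweil_Integration.integral_reflect_real[where f="\<lambda>y. M * (exp (-(real n * c / 2) * y^2) * \<bar>y\<bar>^S)"])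
    also have "\<dots> \<le> B / real n powr ((real S + 1)/2)"
      unfolding B_def by (rule R02[OF c(1) M_nn n])
    finally show "norm (Rint v S n (-2) 0) \<le> B / real n powr ((real S + 1)/2)" .
  qed
  show ?thesis using pos neg by simp
qed


end
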